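(* Let $G$ be a group and $A$ an additive abelian group with a right $G$-action by group automorphisms. For any $a\in A$, $n\in\mathbb N$ and $g_1,\dots,g_n\in G$, $$[D^na](g_1,\dots,g_n)=a^{g_1\cdots g_n}+\sum_{s=1}^{n-1}(-1)^s\sum_{1\le i_1<\dots<i_s\le n}a^{\pi_{i_1,\dots,i_s}(g_1,\dots,g_n)}+(-1)^na.$$
   Context: Right action: $a\mapsto a^g$, $a^{\mathbf e}=a$, $(a^g)^h=a^{gh}$, additive in $a$. $\mathcal C^0(G,A)=A$; for $n\ge1$, $\mathcal C^n(G,A)$ consists of functions $G^n\to A$ vanishing whenever some argument is the identity $\mathbf e$. For $n\ge1$, $(d_nc)(g_1,\dots,g_n)=[c(g_1,\dots,g_{n-1})]^{g_n}-c(g_1,\dots,g_{n-1})$ for $c\in\mathcal C^{n-1}(G,A)$; $D^0=\mathrm{id}_A$, $D^n=d_nD^{n-1}$. For $1\le i_1<\dots<i_s\le n$, $\pi_{i_1,\dots,i_s}(g_1,\dots,g_n)$ is the ordered product $g_1\cdots g_n$ with the factors $g_{i_1},\dots,g_{i_s}$ omitted (the empty product being $\mathbf e$). *)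

theory Defs
  imports "HOL-Algebra.Group"
begin

definition right_aut_action :: "('g, 'm) monoid_scheme \<Rightarrow> ('a::ab_group_add \<Rightarrow> 'g \<Rightarrow> 'a) \<Rightarrow> bool" where
  "right_aut_action G act \<longleftrightarrow>
     (\<forall>a. act a \<one>\<^bsub>G\<^esub> = a) \<and>
     (\<forall>a g h. g \<in> carrier G \<longrightarrow> h \<in> carrier G \<longrightarrow> act (act a g) h = act a (g \<otimes>\<^bsub>G\<^esub> h)) \<and>
     (\<forall>a b g. g \<in> carrier G \<longrightarrow> act (a + b) g = act a g + act b g)"

text \<open>Cochains G^n \<rightarrow> A are represented as functions on lists (g_1,...,g_n).
  The coboundary d_n: (d c)(g_1,...,g_n) = c(g_1,...,g_{n-1})^{g_n} - c(g_1,...,g_{n-1}).\<close>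
definition cobound :: "('a::ab_group_add \<Rightarrow> 'g \<Rightarrow> 'a) \<Rightarrow> ('g list \<Rightarrow> 'a) \<Rightarrow> ('g list \<Rightarrow> 'a)" where
  "cobound act c = (\<lambda>gs. act (c (butlast gs)) (last gs) - c (butlast gs))"

fun Dpow :: "('a::ab_group_add \<Rightarrow> 'g \<Rightarrow> 'a) \<Rightarrow> nat \<Rightarrow> 'a \<Rightarrow> ('g list \<Rightarrow> 'a)" where
  "Dpow act 0 a = (\<lambda>_. a)"
| "Dpow act (Suc n) a = cobound act (Dpow act n a)"

text \<open>pi_S(g_1,...,g_n): ordered product g_1...g_n with the factors g_i (i \<in> S, 1-based) omitted;
  empty product = identity.\<close>
definition omit_prod :: "('g, 'm) monoid_scheme \<Rightarrow> 'g list \<Rightarrow> nat set \<Rightarrow> 'g" where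
  "omit_prod G gs S = foldr (\<lambda>g acc. g \<otimes>\<^bsub>G\<^esub> acc) [gs ! i. i \<leftarrow> [0..<length gs], Suc i \<notin> S] \<one>\<^bsub>G\<^esub>"

definition sgn_pow :: "nat \<Rightarrow> 'a::ab_group_add \<Rightarrow> 'a" where
  "sgn_pow s x = (if even s then x else - x)"

end

theory Submission
  imports Defs
begin

definition LL :: "'g list \<Rightarrow> nat set \<Rightarrow> 'g list" where
  "LL xs S = [xs ! i. i \<leftarrow> [0..<length xs], Suc i \<notin> S]"

lemma omit_LL: "omit_prod G xs S = foldr (\<lambda>g acc. g \<otimes>\<^bsub>G\<^esub> acc) (LL xs S) \<one>\<^bsub>G\<^esub>"
  unfolding omit_prod_def LL_def by simp

lemma LL_snoc: "LL (xs@[g]) S = LL xs S @ (if Suc (length xs) \<in> S then [] else [g])"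
proof -
  have "map (\<lambda>i. if Suc i \<notin> S then [(xs @ [g]) ! i] else []) [0..<length xs]
      = map (\<lambda>i. if Suc i \<notin> S then [xs ! i] else []) [0..<length xs]"
    by (rule map_cong) (auto simp: nth_append)
  note eq = this
  show ?thesis unfolding LL_def
    by (simp only: length_append_singleton upt_Suc_append[OF le0] map_append concat_append eq) simp
qed

lemma LL_insert: "k > length xs \<Longrightarrow> LL xs (insert k S) = LL xs S"
  unfolding LL_def by (intro arg_cong[where f=concat] map_cong) auto

lemma LL_all: "LL xs {1..length xs} = []"
  unfolding LL_def by (induction xs rule: rev_induct) auto

context group begin
lemma foldr_closed: "set l \<subseteq> carrier G \<Longrightarrow> foldr (\<lambda>g acc. g \<otimes> acc) l \<one> \<in> carrier G"
  by (induction l) auto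
lemma foldr_shift: "set l \<subseteq> carrier G \<Longrightarrow> x \<in> carrier G \<Longrightarrow>
   foldr (\<lambda>g acc. g \<otimes> acc) l x = foldr (\<lambda>g acc. g \<otimes> acc) l \<one> \<otimes> x"
  by (induction l) (auto simp: m_assoc foldr_closed)
end

lemma LL_set: "set (LL xs S) \<subseteq> set xs"
  unfolding LL_def by (auto split: if_splits)

lemma omit_snoc:
  assumes "group G" "set xs \<subseteq> carrier G" "g \<in> carrier G"
  shows "omit_prod G (xs@[g]) S = (if Suc (length xs) \<in> S then omit_prod G xs S else omit_prod G xs S \<otimes>\<^bsub>G\<^esub> g)"
  using group.foldr_shift[OF assms(1), of "LL xs S" g] LL_set[of xs S] assms
  by (auto simp: omit_LL LL_snoc monoid.r_one[OF group.is_monoid[OF assms(1)]])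

lemma omit_insert: "k > length xs \<Longrightarrow> omit_prod G xs (insert k S) = omit_prod G xs S"
  by (simp add: omit_LL LL_insert)

lemma omit_closed: "group G \<Longrightarrow> set xs \<subseteq> carrier G \<Longrightarrow> omit_prod G xs S \<in> carrier G"
  unfolding omit_LL using group.foldr_closed LL_set by (metis subset_trans)

lemma act_basic:
  assumes "right_aut_action G act" "g \<in> carrier G"
  shows "act 0 g = 0" "act (- x) g = - act x g" "act (sgn_pow k x) g = sgn_pow k (act x g)"
    "act (x - y) g = act x g - act y g"
proof -
  have add: "\<And>a b. act (a + b) g = act a g + act b g" using assms unfolding right_aut_action_def by blast
  show z: "act 0 g = 0" using add[of 0 0] by simp
  have n: "\<And>x. act (- x) g = - act x g" using add z by (metis neg_eq_iff_add_eq_0 add.right_inverse)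
  show "act (- x) g = - act x g" by (rule n)
  show "act (sgn_pow k x) g = sgn_pow k (act x g)" using n by (simp add: sgn_pow_def)
  show "act (x - y) g = act x g - act y g" using add[of x "-y"] n[of y] by simp
qed

lemma act_sum:
  assumes "right_aut_action G act" "g \<in> carrier G"
  shows "act (sum f A) g = (\<Sum>x\<in>A. act (f x) g)"
proof (induction A rule: infinite_finite_induct)
  case (insert x F)
  then show ?case using assms unfolding right_aut_action_def by simp
qed (use act_basic[OF assms] in auto)

lemma sgn_pow_Suc: "sgn_pow (Suc k) x = - sgn_pow k x"
  by (simp add: sgn_pow_def)

lemma sum_neg_sgn: "- (\<Sum>S\<in>A. sgn_pow (f S) (x S)) = (\<Sum>S\<in>A. sgn_pow (Suc (f S)) (x S))"
  by (simp add: sgn_pow_Suc sum_negf)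

lemma main:
  assumes G: "group G" and act: "right_aut_action G act"
  shows "set gs \<subseteq> carrier G \<Longrightarrow> Dpow act (length gs) a gs =
     (\<Sum>S\<in>Pow {1..length gs}. sgn_pow (card S) (act a (omit_prod G gs S)))"
proof (induction gs rule: rev_induct)
  case Nil
  have "act a \<one>\<^bsub>G\<^esub> = a" using act unfolding right_aut_action_def by blast
  then show ?case by (simp add: omit_prod_def sgn_pow_def)
next
  case (snoc g xs)
  define n where "n = length xs"
  have xs: "set xs \<subseteq> carrier G" and g: "g \<in> carrier G" using snoc.prems by auto
  define F where "F S = sgn_pow (card S) (act a (omit_prod G (xs@[g]) S))" for S
  have IH: "Dpow act n a xs = (\<Sum>S\<in>Pow {1..n}. sgn_pow (card S) (act a (omit_prod G xs S)))"
    using snoc.IH xs n_def by simp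
  have fin: "finite (Pow {1..n})" by simp
  have part1: "act (Dpow act n a xs) g = (\<Sum>S\<in>Pow {1..n}. F S)"
    unfolding IH act_sum[OF act g]
  proof (rule sum.cong[OF refl])
    fix S assume S: "S \<in> Pow {1..n}"
    then have "Suc n \<notin> S" by auto
    then have "omit_prod G (xs@[g]) S = omit_prod G xs S \<otimes>\<^bsub>G\<^esub> g"
      using omit_snoc[OF G xs g] n_def by simp
    moreover have "act (act a (omit_prod G xs S)) g = act a (omit_prod G xs S \<otimes>\<^bsub>G\<^esub> g)"
      using act omit_closed[OF G xs] g unfolding right_aut_action_def by blast
    ultimately show "act (sgn_pow (card S) (act a (omit_prod G xs S))) g = F S"
      unfolding F_def act_basic(3)[OF act g] by simp
  qed
  have part2: "- Dpow act n a xs = (\<Sum>S\<in>Pow {1..n}. F (insert (Suc n) S))"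
    unfolding IH sum_neg_sgn
  proof (rule sum.cong[OF refl])
    fix S assume S: "S \<in> Pow {1..n}"
    then have ns: "Suc n \<notin> S" and fS: "finite S" by (auto intro: finite_subset)
    then have "omit_prod G (xs@[g]) (insert (Suc n) S) = omit_prod G xs S"
      using omit_snoc[OF G xs g] omit_insert[of xs "Suc n" G S] n_def by simp
    then show "sgn_pow (Suc (card S)) (act a (omit_prod G xs S)) = F (insert (Suc n) S)"
      unfolding F_def using ns fS by simp
  qed
  have inj: "inj_on (insert (Suc n)) (Pow {1..n})"
    by (rule inj_onI) (metis PowD atLeastAtMost_iff insert_ident not_less_eq_eq order_refl subsetD)
  have "(\<Sum>S\<in>Pow {1..Suc n}. F S) = (\<Sum>S\<in>Pow {1..n}. F S) + (\<Sum>S\<in>insert (Suc n) ` Pow {1..n}. F S)"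
  proof -
    have "{1..Suc n} = insert (Suc n) {1..n}" by auto
    then have P: "Pow {1..Suc n} = Pow {1..n} \<union> insert (Suc n) ` Pow {1..n}"
      by (simp add: Pow_insert)
    show ?thesis unfolding P by (rule sum.union_disjoint) auto
  qed
  also have "\<dots> = act (Dpow act n a xs) g - Dpow act n a xs"
    unfolding sum.reindex[OF inj] o_def part1 part2[symmetric] by simp
  finally show ?case unfolding F_def n_def by (simp add: cobound_def)
qed


theorem lemma1p3:
  fixes G :: "('g, 'm) monoid_scheme"
    and act :: "'a::ab_group_add \<Rightarrow> 'g \<Rightarrow> 'a"
    and a :: 'a and n :: nat and gs :: "'g list"
  assumes "group G"
    and "right_aut_action G act"
    and "n \<ge> 1"
    and "length gs = n"
    and "set gs \<subseteq> carrier G"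
  shows "Dpow act n a gs =
           act a (omit_prod G gs {})
         + (\<Sum>s = 1..n - 1. sgn_pow s
              (\<Sum>S \<in> {S. S \<subseteq> {1..n} \<and> card S = s}. act a (omit_prod G gs S)))
         + sgn_pow n a"
proof -
  obtain m where m: "n = Suc m" using assms(3) by (cases n) auto
  define h where "h S = sgn_pow (card S) (act a (omit_prod G gs S))" for S
  define H where "H s = (\<Sum>S \<in> {S. S \<subseteq> {1..n} \<and> card S = s}. h S)" for s
  have one: "act a \<one>\<^bsub>G\<^esub> = a" using assms(2) unfolding right_aut_action_def by blast
  have "Dpow act n a gs = (\<Sum>S\<in>Pow {1..n}. h S)"
    using main[OF assms(1,2) assms(5), of a] assms(4) unfolding h_def by simp
  also have "\<dots> = (\<Sum>s\<in>{0..n}. H s)"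
    unfolding H_def by (subst sum.group[symmetric, of "Pow {1..n}" "{0..n}" card]) 
      (auto intro!: card_mono sum.cong simp: card_mono[of "{1..n}", simplified])
  also have "\<dots> = H 0 + (\<Sum>s = 1..n - 1. H s) + H n"
    unfolding m by (simp add: sum.atLeast0_atMost_Suc sum.atLeast_Suc_atMost)
  also have "H 0 = act a (omit_prod G gs {})"
  proof -
    have "{S. S \<subseteq> {1..n} \<and> card S = 0} = {{}}"
      using finite_subset[OF _ finite_atLeastAtMost[of 1 n]] by fastforce
    then show ?thesis unfolding H_def h_def by (simp add: sgn_pow_def)
  qed
  also have "H n = sgn_pow n a"
  proof -
    have "{S. S \<subseteq> {1..n} \<and> card S = n} = {{1..n}}"
    proof (intro equalityI subsetI)
      fix S assume "S \<in> {S. S \<subseteq> {1..n} \<and> card S = n}"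
      then have "S \<subseteq> {1..n}" "card S = card {1..n}" by auto
      then have "S = {1..n}" using card_subset_eq[of "{1..n}" S] by simp
      then show "S \<in> {{1..n}}" by simp
    qed auto
    moreover have "omit_prod G gs {1..n} = \<one>\<^bsub>G\<^esub>"
      using LL_all[of gs] assms(4) by (simp add: omit_LL)
    ultimately show ?thesis unfolding H_def h_def using one by simp
  qed
  also have "(\<Sum>s = 1..n - 1. H s) = (\<Sum>s = 1..n - 1. sgn_pow s
              (\<Sum>S \<in> {S. S \<subseteq> {1..n} \<and> card S = s}. act a (omit_prod G gs S)))"
  proof (rule sum.cong[OF refl])
    fix s
    have "sgn_pow s (\<Sum>S \<in> {S. S \<subseteq> {1..n} \<and> card S = s}. act a (omit_prod G gs S))
      = (\<Sum>S \<in> {S. S \<subseteq> {1..n} \<and> card S = s}. sgn_pow s (act a (omit_prod G gs S)))"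
      by (simp add: sgn_pow_def sum_negf)
    then show "H s = sgn_pow s
              (\<Sum>S \<in> {S. S \<subseteq> {1..n} \<and> card S = s}. act a (omit_prod G gs S))"
      unfolding H_def h_def by (auto intro!: sum.cong)
  qed
  finally show ?thesis .
qed

end
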